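(* The set $\bigcup_{p=0}^\infty Y_p$ is dense in $\mathbb R$, where $Y_p=\{z\in\mathbb C:\psi^{\circ p}(z)=0\}$ (so $Y_0=\{0\}$, $Y_1=\{-1,1\}$, $Y_2=\{(\pm1\pm\sqrt5)/2\}$, ...). Each $Y_p$ consists of $2^p$ real numbers.
   Context: $\psi(z)=z-1/z$, viewed as a rational map of the Riemann sphere, and $\psi^{\circ p}$ is its $p$-fold composition ($\psi^{\circ0}(z)=z$). *)

theory Defs
  imports "HOL-Analysis.Analysis"
begin

text \<open>The Riemann sphere is modelled as complex option: Some z is a finite point,
  None is the point at infinity.\<close>

definition psi :: "complex option \<Rightarrow> complex option" where
  "psi w = (case w of None \<Rightarrow> None
                    | Some z \<Rightarrow> (if z = 0 then None else Some (z - 1 / z)))"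

definition Y :: "nat \<Rightarrow> complex set" where
  "Y p = {z. (psi ^^ p) (Some z) = Some 0}"

end

theory Submission
  imports Defs
begin

lemma psi_None: "(psi ^^ n) None = None"
  by (induction n) (auto simp: psi_def)

lemma Y0: "Y 0 = {0}"
  by (simp add: Y_def)

lemma Y_Suc: "Y (Suc p) = {z. z \<noteq> 0 \<and> z - 1/z \<in> Y p}"
proof -
  have e: "(psi ^^ Suc p) x = (psi ^^ p) (psi x)" for x
    by (simp add: funpow_Suc_right del: funpow.simps)
  show ?thesis unfolding Y_def e by (auto simp: psi_def psi_None)
qed

lemma Y_neg: "- z \<in> Y p \<longleftrightarrow> z \<in> Y p"
proof (induction p arbitrary: z)
  case 0 then show ?case by (simp add: Y0)
next
  case (Suc p)
  have "1 / z - z = - (z - 1/z)" by simp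
  then show ?case using Suc[of "z - 1/z"] by (simp add: Y_Suc)
qed

lemma aux_l4: "(s::real)^2 = y^2 + 4 \<Longrightarrow> ((y+s)/2)*((y+s)/2) - 1 = y*((y+s)/2)"
  by (simp add: power2_eq_square field_simps)

lemma aux_l5: "(s::real)^2 = t^2 + 4 \<Longrightarrow> ((t+s)/2) * ((t-s)/2) = -1"
  by (simp add: power2_eq_square field_simps)

lemma aux_l2: "((z::complex) - a) * (z - b) = z^2 - (a + b) * z + a*b"
  by (simp add: algebra_simps power2_eq_square)

lemma aux_l3: "(z::complex) \<noteq> 0 \<Longrightarrow> (z - 1/z = w) \<longleftrightarrow> z^2 - w*z - 1 = 0"
  by (simp add: field_simps power2_eq_square)

lemma roots:
  fixes t :: real
  defines "r1 \<equiv> (t + sqrt (t^2+4))/2" and "r2 \<equiv> (t - sqrt (t^2+4))/2"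
  shows "{z. z \<noteq> 0 \<and> z - 1/z = complex_of_real t} = {of_real r1, of_real r2}"
    and "r1 \<noteq> r2"
proof -
  have s: "sqrt (t^2+4)^2 = t^2+4" by simp
  have "t^2+4 > 0" by (smt (verit) zero_le_power2)
  then have sp: "sqrt (t^2+4) > 0" by simp
  have sum: "r1 + r2 = t" unfolding r1_def r2_def by (simp add: field_simps)
  have prod: "r1 * r2 = -1" unfolding r1_def r2_def
    using aux_l5[OF s] .
  show "r1 \<noteq> r2" unfolding r1_def r2_def using sp by simp
  have fac: "(z - of_real r1) * (z - of_real r2) = z^2 - of_real t * z - 1" for z :: complex
  proof -
    have "(z - of_real r1) * (z - of_real r2) = z^2 - of_real (r1 + r2) * z + of_real (r1*r2)"
      by (simp add: aux_l2)
    then show ?thesis using sum prod by simp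
  qed
  have eq: "(z \<noteq> 0 \<and> z - 1/z = of_real t) \<longleftrightarrow> z^2 - of_real t * z - 1 = 0" for z :: complex
  proof (cases "z = 0")
    case True then show ?thesis by simp
  next
    case False
    then show ?thesis by (simp add: aux_l3)
  qed
  show "{z. z \<noteq> 0 \<and> z - 1/z = complex_of_real t} = {of_real r1, of_real r2}"
  proof (rule set_eqI)
    fix z :: complex
    have "(z \<noteq> 0 \<and> z - 1/z = complex_of_real t) \<longleftrightarrow> (z - of_real r1) * (z - of_real r2) = 0"
      using eq[of z] fac[of z] by simp
    also have "\<dots> \<longleftrightarrow> z = of_real r1 \<or> z = of_real r2" by simp
    finally show "z \<in> {z. z \<noteq> 0 \<and> z - 1/z = complex_of_real t} \<longleftrightarrow> z \<in> {of_real r1, of_real r2}"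
      by simp
  qed
qed

lemma Y_props: "Y p \<subseteq> \<real> \<and> finite (Y p) \<and> card (Y p) = 2 ^ p"
proof (induction p)
  case 0 then show ?case by (simp add: Y0)
next
  case (Suc p)
  define R where "R w = {z. z \<noteq> (0::complex) \<and> z - 1/z = w}" for w
  have U: "Y (Suc p) = (\<Union>w\<in>Y p. R w)" unfolding Y_Suc R_def by blast
  have R2: "R w \<subseteq> \<real> \<and> finite (R w) \<and> card (R w) = 2" if "w \<in> Y p" for w
  proof -
    from that Suc.IH have "w \<in> \<real>" by blast
    then obtain t where t: "w = of_real t" using Reals_cases by blast
    define r1 where "r1 = (t + sqrt (t^2+4))/2"
    define r2 where "r2 = (t - sqrt (t^2+4))/2"
    have RR: "R w = {of_real r1, of_real r2}" unfolding R_def t r1_def r2_def by (rule roots(1))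
    have "r1 \<noteq> r2" unfolding r1_def r2_def by (rule roots(2))
    then have ne: "complex_of_real r1 \<noteq> of_real r2" by simp
    show ?thesis unfolding RR using ne by simp
  qed
  have "card (\<Union>w\<in>Y p. R w) = (\<Sum>w\<in>Y p. card (R w))"
  proof (rule card_UN_disjoint)
    show "finite (Y p)" using Suc by blast
    show "\<forall>i\<in>Y p. finite (R i)" using R2 by blast
    show "\<forall>i\<in>Y p. \<forall>j\<in>Y p. i \<noteq> j \<longrightarrow> R i \<inter> R j = {}"
    proof (intro ballI impI)
      fix i j :: complex assume "i \<noteq> j"
      then show "R i \<inter> R j = {}" unfolding R_def by auto
    qed
  qed
  also have "\<dots> = (\<Sum>w\<in>Y p. 2)" using R2 by (intro sum.cong) auto
  also have "\<dots> = 2 * 2 ^ p" using Suc by simp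
  finally have c: "card (Y (Suc p)) = 2 ^ Suc p" unfolding U by simp
  have f: "finite (Y (Suc p))" unfolding U using Suc R2 by blast
  have r: "Y (Suc p) \<subseteq> \<real>" unfolding U using R2 by blast
  show ?case using c f r by blast
qed

definition hit :: "real \<Rightarrow> real \<Rightarrow> bool" where
  "hit a b \<longleftrightarrow> (\<exists>p y. a \<le> y \<and> y \<le> b \<and> complex_of_real y \<in> Y p)"

lemma pull:
  assumes "0 < a" "a \<le> b" "hit (a - 1/a) (b - 1/b)"
  shows "hit a b"
proof -
  obtain p y where y: "a - 1/a \<le> y" "y \<le> b - 1/b" "complex_of_real y \<in> Y p"
    using assms(3) unfolding hit_def by blast
  define x where "x = (y + sqrt (y^2+4))/2"
  have s: "sqrt (y^2+4)^2 = y^2+4" by simp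
  have "sqrt (y^2+4) > sqrt (y^2)" by (simp del: real_sqrt_abs)
  then have "sqrt (y^2+4) > \<bar>y\<bar>" by simp
  then have "0 < y + sqrt (y^2+4)" using abs_ge_minus_self[of y] by linarith
  then have xp: "x > 0" unfolding x_def by simp
  have xy: "x - 1/x = y"
  proof -
    have "x * x - 1 = y * x" unfolding x_def using aux_l4[OF s] .
    then show ?thesis using xp by (simp add: field_simps)
  qed
  have mono: "u - 1/u < v - 1/v" if "0 < u" "u < v" for u v :: real
  proof -
    have "1/v < 1/u" using that by (simp add: frac_less2)
    then show ?thesis using that by linarith
  qed
  have "a \<le> x"
  proof (rule ccontr)
    assume "\<not> a \<le> x" then have "x - 1/x < a - 1/a" using mono xp by simp
    then show False using xy y by linarith
  qed
  moreover have "x \<le> b"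
  proof (rule ccontr)
    assume "\<not> x \<le> b" then have "b - 1/b < x - 1/x" using mono assms by simp
    then show False using xy y by linarith
  qed
  moreover have "complex_of_real x \<in> Y (Suc p)"
  proof -
    have "complex_of_real x - 1 / complex_of_real x = complex_of_real y"
      using xy by (metis of_real_1 of_real_diff of_real_divide)
    then show ?thesis using xp y(3) by (simp add: Y_Suc)
  qed
  ultimately show ?thesis unfolding hit_def by blast
qed

lemma hit_neg: "hit a b \<Longrightarrow> hit (-b) (-a)"
  unfolding hit_def
proof (elim exE conjE)
  fix p y assume "a \<le> y" "y \<le> b" "complex_of_real y \<in> Y p"
  then show "\<exists>p y. - b \<le> y \<and> y \<le> - a \<and> complex_of_real y \<in> Y p"
    by (intro exI[of _ p] exI[of _ "-y"]) (simp add: Y_neg)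
qed

lemma hit_one: "a \<le> 1 \<Longrightarrow> 1 \<le> b \<Longrightarrow> hit a b"
  unfolding hit_def
  by (intro exI[of _ 1] exI[of _ 1]) (simp add: Y_Suc Y0)

lemma inv_lt1: "1 < (x::real) \<Longrightarrow> 1/x < 1"
proof -
  assume h: "1 < x"
  then have "0 < x" by linarith
  then show ?thesis using h by (simp only: divide_less_eq_1_pos)
qed

lemma prod_lt1: "0 < (a::real) \<Longrightarrow> a < b \<Longrightarrow> b < 1 \<Longrightarrow> a * b < 1"
proof -
  assume h: "0 < a" "a < b" "b < 1"
  then have "a < 1" "0 < b" by linarith+
  then have "a * b < 1 * b" by (rule mult_strict_right_mono)
  then show ?thesis using h by linarith
qed

lemma lt_inv: "0 < (b::real) \<Longrightarrow> b < 1 \<Longrightarrow> b < 1/b"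
proof -
  assume h: "0 < b" "b < 1"
  have "1 < 1/b" using h by simp
  then show ?thesis using h by linarith
qed

lemma sq_expand: "(1::real) < b \<Longrightarrow> (b - 1/b)^2 = b^2 - 2 + 1/b^2"
  by (simp add: power2_eq_square field_simps)

lemma step:
  assumes c: "c > 0"
    and H: "c < 1 \<Longrightarrow> \<forall>a b. 0 < a \<longrightarrow> a < b \<longrightarrow> 2*c \<le> b - a \<longrightarrow> hit a b"
  shows "\<forall>a b. 0 < a \<longrightarrow> a < b \<longrightarrow> c \<le> b - a \<longrightarrow> hit a b"
proof -
  have M: "\<forall>a b. 0 < a \<longrightarrow> a < b \<longrightarrow> b^2 \<le> real m \<longrightarrow> c \<le> b - a \<longrightarrow> hit a b" for m :: nat
  proof (induction m rule: less_induct)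
    case (less m)
    show ?case
    proof (intro allI impI)
      fix a b :: real
      assume ab: "0 < a" "a < b" "b^2 \<le> real m" "c \<le> b - a"
      consider "a \<le> 1 \<and> 1 \<le> b" | "b < 1" | "1 < a" by linarith
      then show "hit a b"
      proof cases
        case 1 then show ?thesis using hit_one by blast
      next
        case 2
        then have "c < 1" using ab by linarith
        have ab1: "a * b < 1" using ab(1,2) 2
          by (rule prod_lt1)
        have "b - a \<le> (b - a) / (a*b)"
          using ab ab1 by (simp add: le_divide_eq)
        also have "(b - a)/(a*b) = 1/a - 1/b" using ab by (simp add: field_simps)
        finally have d: "2*c \<le> (1/a - a) - (1/b - b)" using ab by linarith
        have "0 < b" using ab by linarith
        then have "b < 1/b" using 2 by (rule lt_inv)
        then have p: "0 < 1/b - b" by linarith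
        have q: "1/b - b < 1/a - a" using d c by linarith
        have "hit (1/b - b) (1/a - a)" using H[OF \<open>c<1\<close>, rule_format, OF p q d] .
        from hit_neg[OF this] have "hit (a - 1/a) (b - 1/b)" by simp
        then show ?thesis using pull ab by simp
      next
        case 3
        have b1: "1 < b" using 3 ab by linarith
        have "1 < b^2" using b1 by (simp add: one_less_power)
        then have m1: "m \<ge> 1" using ab by linarith
        have "1/a < 1" using 3 by (rule inv_lt1)
        then have ap: "0 < a - 1/a" using 3 by linarith
        have "1/b < 1/a" using ab by (simp add: frac_less2)
        then have lt: "a - 1/a < b - 1/b" "c \<le> (b - 1/b) - (a - 1/a)" using ab by linarith+
        have e2: "(b - 1/b)^2 = b^2 - 2 + 1/b^2" using b1 by (rule sq_expand)
        have "1/b^2 < 1" using \<open>1 < b^2\<close> by (rule inv_lt1)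
        moreover have rm: "real (m - 1) = real m - 1" using m1 by (simp add: of_nat_diff)
        ultimately have sq: "(b - 1/b)^2 \<le> real (m - 1)" using e2 ab(3) by linarith
        have "m - 1 < m" using m1 by simp
        then have "hit (a - 1/a) (b - 1/b)"
          using less[of "m - 1", rule_format, OF _ ap lt(1) sq lt(2)] by blast
        then show ?thesis using pull ab by simp
      qed
    qed
  qed
  show ?thesis
  proof (intro allI impI)
    fix a b :: real assume "0 < a" "a < b" "c \<le> b - a"
    moreover have "b^2 \<le> real (nat \<lceil>b^2\<rceil>)" by linarith
    ultimately show "hit a b" using M by blast
  qed
qed

lemma all_n: "\<forall>a b. 0 < a \<longrightarrow> a < b \<longrightarrow> 1/2^n \<le> b - a \<longrightarrow> hit a b"
proof (induction n)
  case 0 then show ?case using step[of 1] by simp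
next
  case (Suc n)
  have e: "2 * (1 / 2 ^ Suc n) = (1/2^n :: real)" by simp
  show ?case
  proof (rule step)
    show "(0::real) < 1 / 2 ^ Suc n" by simp
    show "\<forall>a b. 0 < a \<longrightarrow> a < b \<longrightarrow> 2 * (1 / 2 ^ Suc n) \<le> b - a \<longrightarrow> hit a b"
      unfolding e by (rule Suc.IH)
  qed
qed

lemma hit_pos: assumes "0 < a" "a < b" shows "hit a b"
proof -
  have "b - a > 0" using assms by simp
  then obtain n where "(1/2::real)^n < b - a" using real_arch_pow_inv[of "b - a" "1/2"] by auto
  then show ?thesis using all_n[of n] assms by (simp add: power_one_over)
qed

theorem proposition3p2:
  shows "closure (\<Union>p. Y p) = \<real> \<and>
         (\<forall>p. Y p \<subseteq> \<real> \<and> finite (Y p) \<and> card (Y p) = 2 ^ p)"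
proof (intro conjI allI)
  show "Y p \<subseteq> \<real>" "finite (Y p)" "card (Y p) = 2 ^ p" for p using Y_props[of p] by blast+
  show "closure (\<Union>p. Y p) = \<real>"
  proof
    show "closure (\<Union>p. Y p) \<subseteq> \<real>"
    proof (rule closure_minimal)
      show "(\<Union>p. Y p) \<subseteq> \<real>" using Y_props by blast
      show "closed (\<real> :: complex set)" by (rule closed_complex_Reals)
    qed
    show "\<real> \<subseteq> closure (\<Union>p. Y p)"
    proof
      fix x :: complex assume "x \<in> \<real>"
      then obtain t where t: "x = of_real t" using Reals_cases by blast
      show "x \<in> closure (\<Union>p. Y p)"
        unfolding closure_approachable
      proof (intro allI impI)
        fix e :: real assume e: "e > 0"
        show "\<exists>y\<in>\<Union>p. Y p. dist y x < e"
        proof (cases "t \<ge> 0")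
          case True
          have "hit (t + e/4) (t + e/2)" using hit_pos e True by simp
          then obtain p y where y: "t + e/4 \<le> y" "y \<le> t + e/2" "complex_of_real y \<in> Y p"
            unfolding hit_def by blast
          have "dist (complex_of_real y) x = \<bar>y - t\<bar>" unfolding t by (simp add: dist_norm flip: of_real_diff)
          also have "\<dots> < e" using y e by simp
          finally show ?thesis using y by blast
        next
          case False
          have "hit (-t + e/4) (-t + e/2)" using hit_pos e False by simp
          then obtain p y where y: "-t + e/4 \<le> y" "y \<le> -t + e/2" "complex_of_real y \<in> Y p"
            unfolding hit_def by blast
          have y': "complex_of_real (-y) \<in> Y p" using y(3) by (simp add: Y_neg)
          have "dist (complex_of_real (-y)) x = \<bar>-y - t\<bar>" unfolding t
            by (simp only: dist_of_real dist_real_def)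
          also have "\<dots> < e" using y e by simp
          finally show ?thesis using y' by blast
        qed
      qed
    qed
  qed
qed

end
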